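(* Let $G=(V,E)$ be a finite directed acyclic graph with $V=\{v_1,\dots,v_n\}$, $G'=(V,E')$ its minimum equivalent graph, and $B$ the associated bipartite graph. For every matching $m$ of $B$, $\mathrm{min}_{sync}(G',\Phi(m))=|E'|-|m|$.
   Context: A path from $u$ to $v$ in a directed graph is a nonempty sequence of edges $(u,w_1),\dots,(w_k,v)$ of that graph. The minimum equivalent graph (MEG) of a finite DAG $G=(V,E)$ is the subgraph $G'=(V,E')$, $E'\subseteq E$, with the same vertex set and the smallest number of edges among subgraphs having the same reachability relation as $G$. The bipartite graph $B=(V_1,V_2,E_B)$ has $V_1=\{x_1,\dots,x_n\}$, $V_2=\{y_1,\dots,y_n\}$ and $E_B=\{(x_i,y_j) : (v_i,v_j)\in E'\}$; a matching is a set of edges of $E_B$ no two sharing an endpoint. Let $S=\{s_1,\dots,s_n\}$ be a set of streams; a stream assignment is a function $V\to S$, considered up to permutation of $S$. For a matching $m$, $\Phi(m)$ is the stream assignment obtained by starting from the partition $\{\{v_1\},\dots,\{v_n\}\}$, merging, for each $(x_i,y_j)\in m$, the blocks containing $v_i$ and $v_j$, and assigning two vertices the same stream iff they lie in the same block. A synchronization plan $\Lambda\subseteq E'$ is safe for a stream assignment $f$ on $G'$ if for every edge $(u,v)\in E'$, either $f(u)=f(v)$ or there is a path $P\subseteq E'$ from $u$ to $v$ with $P\cap\Lambda\neq\emptyset$; $\mathrm{min}_{sync}(G',f)=\min\{|\Lambda| : \Lambda\subseteq E' \text{ safe for } f \text{ on } G'\}$. *)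

theory Defs
  imports Main
begin

definition is_dag :: "'a set \<Rightarrow> ('a \<times> 'a) set \<Rightarrow> bool" where
  "is_dag V E \<longleftrightarrow> finite V \<and> E \<subseteq> V \<times> V \<and> acyclic E"

(* Reachability relation (paths are nonempty) = transitive closure. *)
definition is_MEG :: "('a \<times> 'a) set \<Rightarrow> ('a \<times> 'a) set \<Rightarrow> bool" where
  "is_MEG E E' \<longleftrightarrow> E' \<subseteq> E \<and> E'\<^sup>+ = E\<^sup>+ \<and>
     (\<forall>F. F \<subseteq> E \<and> F\<^sup>+ = E\<^sup>+ \<longrightarrow> card E' \<le> card F)"

definition is_path :: "('a \<times> 'a) set \<Rightarrow> 'a \<Rightarrow> 'a \<Rightarrow> ('a \<times> 'a) list \<Rightarrow> bool" where
  "is_path F u v P \<longleftrightarrow> P \<noteq> [] \<and> set P \<subseteq> F \<and> fst (hd P) = u \<and> snd (last P) = v \<and>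
     (\<forall>i. Suc i < length P \<longrightarrow> snd (P ! i) = fst (P ! Suc i))"

(* Bipartite graph B: x_i = Inl v_i, y_j = Inr v_j. *)
definition bip_edges :: "('a \<times> 'a) set \<Rightarrow> ('a + 'a) rel" where
  "bip_edges E' = {(Inl u, Inr v) | u v. (u, v) \<in> E'}"

definition is_matching :: "('b \<times> 'b) set \<Rightarrow> ('b \<times> 'b) set \<Rightarrow> bool" where
  "is_matching EB m \<longleftrightarrow> m \<subseteq> EB \<and>
     (\<forall>e\<in>m. \<forall>e'\<in>m. e \<noteq> e' \<longrightarrow>
        {fst e, snd e} \<inter> {fst e', snd e'} = {})"

(* Phi(m): the stream of v is (represented by) its block in the partition of V obtained
   by merging v_i and v_j for each (x_i, y_j) in m. Stream assignments are only relevant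
   up to permutation of streams, so naming each stream by its block is faithful. *)
definition Phi :: "'a set \<Rightarrow> ('a + 'a) rel \<Rightarrow> 'a \<Rightarrow> 'a set" where
  "Phi V m v = (let R = {(u, w). (Inl u, Inr w) \<in> m} in
                 {w \<in> V. (v, w) \<in> (R \<union> R\<inverse>)\<^sup>*})"

definition safe_plan :: "('a \<times> 'a) set \<Rightarrow> ('a \<Rightarrow> 's) \<Rightarrow> ('a \<times> 'a) set \<Rightarrow> bool" where
  "safe_plan E' f \<Lambda> \<longleftrightarrow> \<Lambda> \<subseteq> E' \<and>
     (\<forall>(u, v)\<in>E'. f u = f v \<or> (\<exists>P. is_path E' u v P \<and> set P \<inter> \<Lambda> \<noteq> {}))"

definition min_sync :: "('a \<times> 'a) set \<Rightarrow> ('a \<Rightarrow> 's) \<Rightarrow> nat" where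
  "min_sync E' f = Min {card \<Lambda> | \<Lambda>. safe_plan E' f \<Lambda>}"

end

theory Submission
  imports Defs
begin

lemma meg_edge:
  assumes meg: "is_MEG E E'" and fin: "finite E" and e: "(u,v) \<in> E'"
  shows "(u,v) \<notin> (E' - {(u,v)})\<^sup>+"
proof
  assume h: "(u,v) \<in> (E' - {(u,v)})\<^sup>+"
  define F where "F = E' - {(u,v)}"
  have sub: "E' \<subseteq> F\<^sup>+" using h unfolding F_def by auto
  have "E'\<^sup>+ \<subseteq> F\<^sup>+"
    by (metis sub trancl_id trancl_mono_subset trans_trancl)
  moreover have "F\<^sup>+ \<subseteq> E'\<^sup>+" unfolding F_def by (simp add: trancl_mono_subset)
  ultimately have eq: "F\<^sup>+ = E\<^sup>+" using meg unfolding is_MEG_def by auto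
  have fE': "finite E'" using meg fin unfolding is_MEG_def using finite_subset by auto
  have "card F < card E'" unfolding F_def using e fE' by (meson card_Diff1_less)
  moreover have "F \<subseteq> E" using meg unfolding is_MEG_def F_def by auto
  moreover have "\<forall>F. F \<subseteq> E \<and> F\<^sup>+ = E\<^sup>+ \<longrightarrow> card E' \<le> card F"
    using meg unfolding is_MEG_def by blast
  ultimately show False using eq by (meson leD)
qed

lemma path_reach1:
  assumes "is_path F u v P" shows "i < length P \<Longrightarrow> (u, fst (P!i)) \<in> F\<^sup>*"
proof (induction i)
  case 0
  then show ?case using assms unfolding is_path_def by (metis hd_conv_nth rtrancl.rtrancl_refl)
next
  case (Suc i)
  have "P!i \<in> F" using Suc assms unfolding is_path_def by auto
  moreover have "snd (P!i) = fst (P ! Suc i)" using Suc assms unfolding is_path_def by auto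
  ultimately show ?case using Suc
    by (metis Suc_lessD prod.collapse rtrancl.rtrancl_into_rtrancl)
qed

lemma path_reach2:
  assumes "is_path F u v P" shows "length P - i = Suc k \<Longrightarrow> (snd (P!i), v) \<in> F\<^sup>*"
proof (induction k arbitrary: i)
  case 0
  then have "i = length P - 1" by auto
  then show ?case using assms unfolding is_path_def by (metis last_conv_nth rtrancl.rtrancl_refl)
next
  case (Suc k)
  have "P!(Suc i) \<in> F" using Suc assms unfolding is_path_def by auto
  moreover have "snd (P!i) = fst (P ! Suc i)" using Suc assms unfolding is_path_def by auto
  moreover have "(snd (P!Suc i), v) \<in> F\<^sup>*" using Suc by auto
  ultimately show ?case
    by (metis converse_rtrancl_into_rtrancl prod.collapse)
qed

lemma path_edges:
  assumes meg: "is_MEG E E'" and fin: "finite E" and acyc: "acyclic E'"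
    and e: "(u,v) \<in> E'" and p: "is_path E' u v P" and ab: "(a,b) \<in> set P"
  shows "(a,b) = (u,v)"
proof (rule ccontr)
  assume ne: "(a,b) \<noteq> (u,v)"
  define r where "r = E' - {(u,v)}"
  have E'eq: "E' = insert (u,v) r" using e unfolding r_def by auto
  have rsub: "r \<subseteq> E'" unfolding r_def by auto
  obtain i where i: "i < length P" "P!i = (a,b)" using ab by (metis in_set_conv_nth)
  have ua: "(u,a) \<in> E'\<^sup>*" using path_reach1[OF p i(1)] i by simp
  have bv: "(b,v) \<in> E'\<^sup>*" using path_reach2[OF p, of i "length P - i - 1"] i by simp
  have abE: "(a,b) \<in> E'" using p i unfolding is_path_def by (metis nth_mem subsetD)
  have abr: "(a,b) \<in> r" using abE ne unfolding r_def by auto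
  have notr: "(u,v) \<notin> r\<^sup>+" using meg_edge[OF meg fin e] unfolding r_def .
  have rr: "r\<^sup>* \<subseteq> E'\<^sup>*" using rsub by (simp add: rtrancl_mono)
  from ua have ua': "(u,a) \<in> r\<^sup>* \<or> (v,a) \<in> r\<^sup>*"
    unfolding E'eq rtrancl_insert by auto
  from bv have bv': "(b,v) \<in> r\<^sup>* \<or> (b,u) \<in> r\<^sup>*"
    unfolding E'eq rtrancl_insert by auto
  show False
  proof (cases "(v,a) \<in> r\<^sup>*")
    case True
    then have "(v,a) \<in> E'\<^sup>*" using rr by auto
    then have "(v,b) \<in> E'\<^sup>+" using abE by (rule rtrancl_into_trancl1)
    then have "(v,v) \<in> E'\<^sup>+" using bv by (rule trancl_rtrancl_trancl)
    then show False using acyc unfolding acyclic_def by auto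
  next
    case F1: False
    then have ua2: "(u,a) \<in> r\<^sup>*" using ua' by auto
    show False
    proof (cases "(b,u) \<in> r\<^sup>*")
      case True
      then have "(b,u) \<in> E'\<^sup>*" using rr by auto
      have "(u,b) \<in> E'\<^sup>+" using ua abE by (rule rtrancl_into_trancl1)
      then have "(u,u) \<in> E'\<^sup>+" using \<open>(b,u) \<in> E'\<^sup>*\<close> by (rule trancl_rtrancl_trancl)
      then show False using acyc unfolding acyclic_def by auto
    next
      case False
      then have "(b,v) \<in> r\<^sup>*" using bv' by auto
      have "(u,b) \<in> r\<^sup>+" using ua2 abr by (rule rtrancl_into_trancl1)
      then have "(u,v) \<in> r\<^sup>+" using \<open>(b,v) \<in> r\<^sup>*\<close> by (rule trancl_rtrancl_trancl)
      then show False using notr by auto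
    qed
  qed
qed

lemma conn_chain:
  assumes func: "\<And>x y z. (x,y) \<in> R \<Longrightarrow> (x,z) \<in> R \<Longrightarrow> y = z"
    and inj: "\<And>x y z. (x,z) \<in> R \<Longrightarrow> (y,z) \<in> R \<Longrightarrow> x = y"
    and h: "(x,y) \<in> (R \<union> R\<inverse>)\<^sup>*"
  shows "(x,y) \<in> R\<^sup>* \<or> (y,x) \<in> R\<^sup>*"
  using h
proof (induction rule: rtrancl_induct)
  case base
  then show ?case by auto
next
  case (step y z)
  from step.hyps(2) have "(y,z) \<in> R \<or> (z,y) \<in> R" by auto
  then show ?case
  proof
    assume yz: "(y,z) \<in> R"
    from step.IH show ?case
    proof
      assume "(x,y) \<in> R\<^sup>*" then show ?case using yz by auto
    next
      assume yx: "(y,x) \<in> R\<^sup>*"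
      show ?case
      proof (cases "y = x")
        case True then show ?thesis using yz by auto
      next
        case False
        then have "(y,x) \<in> R\<^sup>+" using yx by (simp add: rtrancl_eq_or_trancl)
        then obtain w where "(y,w) \<in> R" "(w,x) \<in> R\<^sup>*" by (meson tranclD)
        then show ?thesis using func yz by blast
      qed
    qed
  next
    assume zy: "(z,y) \<in> R"
    from step.IH show ?case
    proof
      assume "(y,x) \<in> R\<^sup>*" then show ?case using zy by (meson converse_rtrancl_into_rtrancl)
    next
      assume xy: "(x,y) \<in> R\<^sup>*"
      show ?case
      proof (cases "x = y")
        case True then show ?thesis using zy by auto
      next
        case False
        then have "(x,y) \<in> R\<^sup>+" using xy by (simp add: rtrancl_eq_or_trancl)
        then obtain w where "(x,w) \<in> R\<^sup>*" "(w,y) \<in> R" by (meson tranclD2)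
        then show ?thesis using inj zy by blast
      qed
    qed
  qed
qed

theorem theorem3:
  fixes V :: "'a set" and E E' :: "('a \<times> 'a) set" and m :: "('a + 'a) rel"
  assumes "is_dag V E"
    and "is_MEG E E'"
    and "is_matching (bip_edges E') m"
  shows "min_sync E' (Phi V m) = card E' - card m"
proof -
  note dag = assms(1) and meg = assms(2) and mat = assms(3)
  have EV: "E \<subseteq> V \<times> V" and finV: "finite V" and acE: "acyclic E"
    using dag unfolding is_dag_def by auto
  have finE: "finite E" using EV finV by (meson finite_SigmaI finite_subset)
  have E'E: "E' \<subseteq> E" using meg unfolding is_MEG_def by auto
  have finE': "finite E'" using E'E finE finite_subset by auto
  have acyc: "acyclic E'" using acE E'E acyclic_subset by auto
  define R where "R = {(u, w). (Inl u, Inr w) \<in> m}"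
  define S where "S = R \<union> R\<inverse>"
  have msub: "m \<subseteq> bip_edges E'" using mat unfolding is_matching_def by auto
  have RE': "R \<subseteq> E'" unfolding R_def using msub unfolding bip_edges_def by auto
  have mimg: "m = (\<lambda>(u,w). (Inl u, Inr w)) ` R"
  proof
    show "m \<subseteq> (\<lambda>(u,w). (Inl u, Inr w)) ` R"
    proof
      fix x assume x: "x \<in> m"
      then obtain u w where "x = (Inl u, Inr w)" using msub unfolding bip_edges_def by auto
      moreover have "(u,w) \<in> R" using x \<open>x = (Inl u, Inr w)\<close> unfolding R_def by simp
      ultimately show "x \<in> (\<lambda>(u,w). (Inl u, Inr w)) ` R" by (simp add: rev_image_eqI)
    qed
  qed (auto simp: R_def)
  have cardm: "card m = card R"
    unfolding mimg by (rule card_image) (auto simp: inj_on_def)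
  have func: "\<And>x y z. (x,y) \<in> R \<Longrightarrow> (x,z) \<in> R \<Longrightarrow> y = z"
  proof -
    fix x y z assume "(x,y) \<in> R" "(x,z) \<in> R"
    then have a: "(Inl x, Inr y) \<in> m" "(Inl x, Inr z) \<in> m" unfolding R_def by auto
    show "y = z"
    proof (rule ccontr)
      assume "y \<noteq> z"
      then have ne: "(Inl x, Inr y) \<noteq> (Inl x, (Inr z :: 'a + 'a))" by auto
      have mm: "\<forall>e\<in>m. \<forall>e'\<in>m. e \<noteq> e' \<longrightarrow> {fst e, snd e} \<inter> {fst e', snd e'} = {}"
        using mat unfolding is_matching_def by simp
      show False using mm[rule_format, OF a(1) a(2) ne] by simp
    qed
  qed
  have inj: "\<And>x y z. (x,z) \<in> R \<Longrightarrow> (y,z) \<in> R \<Longrightarrow> x = y"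
  proof -
    fix x y z assume "(x,z) \<in> R" "(y,z) \<in> R"
    then have a: "(Inl x, Inr z) \<in> m" "(Inl y, Inr z) \<in> m" unfolding R_def by auto
    show "x = y"
    proof (rule ccontr)
      assume "x \<noteq> y"
      then have ne: "(Inl x, Inr z) \<noteq> (Inl y, (Inr z :: 'a + 'a))" by auto
      have mm: "\<forall>e\<in>m. \<forall>e'\<in>m. e \<noteq> e' \<longrightarrow> {fst e, snd e} \<inter> {fst e', snd e'} = {}"
        using mat unfolding is_matching_def by simp
      show False using mm[rule_format, OF a(1) a(2) ne] by simp
    qed
  qed
  have PhiS: "Phi V m v = {w \<in> V. (v, w) \<in> S\<^sup>*}" for v
    unfolding Phi_def R_def S_def Let_def by simp
  have key: "Phi V m u = Phi V m v \<longleftrightarrow> (u,v) \<in> R" if uv: "(u,v) \<in> E'" for u v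
  proof
    assume "(u,v) \<in> R"
    then have "(u,v) \<in> S" "(v,u) \<in> S" unfolding S_def by auto
    then have "(u,w) \<in> S\<^sup>* \<longleftrightarrow> (v,w) \<in> S\<^sup>*" for w
      using converse_rtrancl_into_rtrancl[of u v S w] converse_rtrancl_into_rtrancl[of v u S w] by blast
    then show "Phi V m u = Phi V m v" unfolding PhiS by auto
  next
    assume eq: "Phi V m u = Phi V m v"
    have "u \<in> V" using uv E'E EV by auto
    then have "u \<in> Phi V m u" unfolding PhiS by auto
    then have "(v,u) \<in> S\<^sup>*" using eq unfolding PhiS by auto
    then have hvu: "(v,u) \<in> (R \<union> R\<inverse>)\<^sup>*" unfolding S_def .
    have c: "(v,u) \<in> R\<^sup>* \<or> (u,v) \<in> R\<^sup>*"
    proof (rule conn_chain[of R v u])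
      fix x y z assume "(x,y) \<in> R" "(x,z) \<in> R" then show "y = z" by (rule func)
    next
      fix x y z assume "(x,z) \<in> R" "(y,z) \<in> R" then show "x = y" by (rule inj)
    qed (rule hvu)
    have RR: "R\<^sup>* \<subseteq> E'\<^sup>*" using RE' by (simp add: rtrancl_mono)
    have "(v,u) \<notin> R\<^sup>*"
    proof
      assume "(v,u) \<in> R\<^sup>*"
      then have "(v,u) \<in> E'\<^sup>*" using RR by auto
      then have "(v,v) \<in> E'\<^sup>+" using uv by (rule rtrancl_into_trancl1)
      then show False using acyc unfolding acyclic_def by auto
    qed
    then have "(u,v) \<in> R\<^sup>*" using c by auto
    moreover have "u \<noteq> v" using uv acyc unfolding acyclic_def by auto
    ultimately have uvR: "(u,v) \<in> R\<^sup>+" by (simp add: rtrancl_eq_or_trancl)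
    show "(u,v) \<in> R"
    proof (rule ccontr)
      assume "(u,v) \<notin> R"
      then have "R \<subseteq> E' - {(u,v)}" using RE' by auto
      then have "(u,v) \<in> (E' - {(u,v)})\<^sup>+" using uvR trancl_mono_subset[of R "E' - {(u,v)}"] by (rule_tac subsetD) auto
      then show False using meg_edge[OF meg finE uv] by auto
    qed
  qed
  define D where "D = E' - R"
  have safeD: "safe_plan E' (Phi V m) D"
    unfolding safe_plan_def
  proof (intro conjI ballI)
    show "D \<subseteq> E'" unfolding D_def by auto
  next
    fix x assume x: "x \<in> E'"
    obtain u v where xe: "x = (u,v)" by force
    show "case x of (u, v) \<Rightarrow> Phi V m u = Phi V m v \<or>
          (\<exists>P. is_path E' u v P \<and> set P \<inter> D \<noteq> {})"
    proof (cases "(u,v) \<in> R")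
      case True then have "Phi V m u = Phi V m v" using key[of u v] x xe by simp
      then show ?thesis using xe by simp
    next
      case False
      then have "is_path E' u v [(u,v)] \<and> set [(u,v)] \<inter> D \<noteq> {}"
        using x xe unfolding is_path_def D_def by auto
      then show ?thesis using xe by blast
    qed
  qed
  have lower: "D \<subseteq> \<Lambda>" if sp: "safe_plan E' (Phi V m) \<Lambda>" for \<Lambda>
  proof
    fix x assume x: "x \<in> D"
    obtain u v where xe: "x = (u,v)" by force
    have uv: "(u,v) \<in> E'" "(u,v) \<notin> R" using x xe unfolding D_def by auto
    then have neq: "Phi V m u \<noteq> Phi V m v" using key by auto
    have all: "\<forall>(u, v)\<in>E'. Phi V m u = Phi V m v \<or> (\<exists>P. is_path E' u v P \<and> set P \<inter> \<Lambda> \<noteq> {})"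
      using sp unfolding safe_plan_def by simp
    have "Phi V m u = Phi V m v \<or> (\<exists>P. is_path E' u v P \<and> set P \<inter> \<Lambda> \<noteq> {})"
      using bspec[OF all uv(1)] by simp
    then obtain P where P: "is_path E' u v P" "set P \<inter> \<Lambda> \<noteq> {}"
      using neq by blast
    then obtain a b where ab: "(a,b) \<in> set P" "(a,b) \<in> \<Lambda>" by auto
    have "(a,b) = (u,v)" using path_edges[OF meg finE acyc uv(1) P(1) ab(1)] .
    then show "x \<in> \<Lambda>" using ab xe by auto
  qed
  have "min_sync E' (Phi V m) = card D"
    unfolding min_sync_def
  proof (rule Min_eqI)
    show "finite {card \<Lambda> |\<Lambda>. safe_plan E' (Phi V m) \<Lambda>}"
    proof (rule finite_subset[of _ "card ` Pow E'"])
      show "{card \<Lambda> |\<Lambda>. safe_plan E' (Phi V m) \<Lambda>} \<subseteq> card ` Pow E'"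
        unfolding safe_plan_def by auto
    qed (use finE' in auto)
  next
    fix y assume "y \<in> {card \<Lambda> |\<Lambda>. safe_plan E' (Phi V m) \<Lambda>}"
    then obtain \<Lambda> where y: "y = card \<Lambda>" "safe_plan E' (Phi V m) \<Lambda>" by auto
    have "finite \<Lambda>" using y(2) finE' unfolding safe_plan_def using finite_subset by auto
    then show "card D \<le> y" using y(1) lower[OF y(2)] card_mono by simp
  next
    show "card D \<in> {card \<Lambda> |\<Lambda>. safe_plan E' (Phi V m) \<Lambda>}" using safeD by auto
  qed
  also have "card D = card E' - card R"
    unfolding D_def using RE' finE' by (meson card_Diff_subset finite_subset)
  finally show ?thesis using cardm by simp
qed

end
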